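(* For every $X\in\{\mathsf{T},\mathsf{S}\}^*$, $X\mathsf{T}\mathsf{S}\mathsf{T}\sqsubseteq X\mathsf{T}$.
   Context: Fix attribute–taxonomy pairs $A_1{:}T_1,\dots,A_d{:}T_d$ with distinct attribute names, where each taxonomy $T_i=(V_i,\le_{V_i})$ is a poset. A t-tuple over a t-schema $S\subseteq\{A_1{:}T_1,\dots,A_d{:}T_d\}$ maps each $A_i$ in $S$ to a value of $V_i$; $\mathcal{D}$ is the set of all t-tuples over all such t-schemas. A preference relation is a binary relation $\succeq$ on $\mathcal{D}$. Preferences are given by a formula $F(x,y)=\bigvee_i P_i(x,y)$, a disjunction of statements; each statement $P_i$ is a disjunction of clauses, each clause a satisfiable conjunction of atoms of the forms $x[A_i]\le_{V_i} v$, $x[A_i]\not\le_{V_i} v$, $y[A_i]\le_{V_i} v$, $y[A_i]\not\le_{V_i} v$; the formula induces $t_1\succeq t_2\iff F(t_1,t_2)$. Operator $\mathsf{T}$ maps a formula to one inducing the transitive closure over $\mathcal{D}$ of the induced relation. Operator $\mathsf{S}$ (specificity-based refinement): repeat rounds; in a round, for each statement $P_i$ let $\mathrm{Impl}(P_i)$ be the set of statements $P_j$ such that $P_j(t_2,t_1)\Rightarrow P_i(t_1,t_2)$ for all $t_1,t_2\in\mathcal{D}$ but not conversely; simultaneously replace every $P_i$ with nonempty $\mathrm{Impl}(P_i)$ by $P_i(x,y)\wedge\bigwedge_{P_j\in \mathrm{Impl}(P_i)}\neg P_j(y,x)$; stop when no $\mathrm{Impl}$ set is nonempty. After each operator, contradictory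 clauses and subsumed statements are removed. For $X\in\{\mathsf{T},\mathsf{S}\}^*$, $\succeq_X$ is the relation induced by applying the operators of $X$ in order to the initial formula. Containment $X\sqsubseteq Y$ means $\succeq_X\subseteq\succeq_Y$ for every initial preference formula. *)

theory Defs
  imports Main
begin

text \<open>Attributes are indexed by 0..d-1; attribute i has taxonomy (V i, le i).
  All values live in one ambient type 'v.\<close>

definition taxonomies :: "nat \<Rightarrow> (nat \<Rightarrow> 'v set) \<Rightarrow> (nat \<Rightarrow> 'v \<Rightarrow> 'v \<Rightarrow> bool) \<Rightarrow> bool" where
  "taxonomies d V le \<longleftrightarrow> (\<forall>i<d.
     (\<forall>a\<in>V i. le i a a) \<and>
     (\<forall>a\<in>V i. \<forall>b\<in>V i. le i a b \<and> le i b a \<longrightarrow> a = b) \<and>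
     (\<forall>a\<in>V i. \<forall>b\<in>V i. \<forall>c\<in>V i. le i a b \<and> le i b c \<longrightarrow> le i a c))"

type_synonym 'v ttuple = "nat \<Rightarrow> 'v option"

text \<open>The set D of all t-tuples over all t-schemas (subsets of the attributes).\<close>
definition tuples :: "nat \<Rightarrow> (nat \<Rightarrow> 'v set) \<Rightarrow> 'v ttuple set" where
  "tuples d V = {t. dom t \<subseteq> {..<d} \<and> (\<forall>i w. t i = Some w \<longrightarrow> w \<in> V i)}"

text \<open>Atom (on_x, i, pos, v): if on_x the atom talks about x else about y;
  pos = True means  z[A_i] \<le> v,  pos = False means  z[A_i] \<not>\<le> v.\<close>
datatype 'v atom = Atom bool nat bool 'v

type_synonym 'v clause = "'v atom list"
type_synonym 'v stmt = "'v clause list"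
type_synonym 'v formula = "'v stmt list"

fun holds_atom :: "(nat \<Rightarrow> 'v \<Rightarrow> 'v \<Rightarrow> bool) \<Rightarrow> 'v atom \<Rightarrow> 'v ttuple \<Rightarrow> 'v ttuple \<Rightarrow> bool" where
  "holds_atom le (Atom onx i pos v) t1 t2 =
     (let t = (if onx then t1 else t2) in
      (case t i of None \<Rightarrow> \<not> pos | Some w \<Rightarrow> (le i w v = pos)))"

definition holds_clause :: "(nat \<Rightarrow> 'v \<Rightarrow> 'v \<Rightarrow> bool) \<Rightarrow> 'v clause \<Rightarrow> 'v ttuple \<Rightarrow> 'v ttuple \<Rightarrow> bool" where
  "holds_clause le c t1 t2 = (\<forall>a\<in>set c. holds_atom le a t1 t2)"

definition holds_stmt :: "(nat \<Rightarrow> 'v \<Rightarrow> 'v \<Rightarrow> bool) \<Rightarrow> 'v stmt \<Rightarrow> 'v ttuple \<Rightarrow> 'v ttuple \<Rightarrow> bool" where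
  "holds_stmt le P t1 t2 = (\<exists>c\<in>set P. holds_clause le c t1 t2)"

definition holds_formula :: "(nat \<Rightarrow> 'v \<Rightarrow> 'v \<Rightarrow> bool) \<Rightarrow> 'v formula \<Rightarrow> 'v ttuple \<Rightarrow> 'v ttuple \<Rightarrow> bool" where
  "holds_formula le F t1 t2 = (\<exists>P\<in>set F. holds_stmt le P t1 t2)"

definition induced :: "nat \<Rightarrow> (nat \<Rightarrow> 'v set) \<Rightarrow> (nat \<Rightarrow> 'v \<Rightarrow> 'v \<Rightarrow> bool) \<Rightarrow> 'v formula
    \<Rightarrow> ('v ttuple \<times> 'v ttuple) set" where
  "induced d V le F = {(t1, t2). t1 \<in> tuples d V \<and> t2 \<in> tuples d V \<and> holds_formula le F t1 t2}"

definition clause_sat :: "nat \<Rightarrow> (nat \<Rightarrow> 'v set) \<Rightarrow> (nat \<Rightarrow> 'v \<Rightarrow> 'v \<Rightarrow> bool) \<Rightarrow> 'v clause \<Rightarrow> bool" where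
  "clause_sat d V le c = (\<exists>t1\<in>tuples d V. \<exists>t2\<in>tuples d V. holds_clause le c t1 t2)"

fun wf_atom :: "nat \<Rightarrow> (nat \<Rightarrow> 'v set) \<Rightarrow> 'v atom \<Rightarrow> bool" where
  "wf_atom d V (Atom onx i pos v) = (i < d \<and> v \<in> V i)"

definition wf_formula :: "nat \<Rightarrow> (nat \<Rightarrow> 'v set) \<Rightarrow> (nat \<Rightarrow> 'v \<Rightarrow> 'v \<Rightarrow> bool) \<Rightarrow> 'v formula \<Rightarrow> bool" where
  "wf_formula d V le F = (\<forall>P\<in>set F. \<forall>c\<in>set P. clause_sat d V le c \<and> (\<forall>a\<in>set c. wf_atom d V a))"

fun neg_atom :: "'v atom \<Rightarrow> 'v atom" where
  "neg_atom (Atom onx i pos v) = Atom onx i (\<not> pos) v"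

fun swap_atom :: "'v atom \<Rightarrow> 'v atom" where
  "swap_atom (Atom onx i pos v) = Atom (\<not> onx) i pos v"

definition swap_stmt :: "'v stmt \<Rightarrow> 'v stmt" where
  "swap_stmt P = map (map swap_atom) P"

definition conj_stmt :: "'v stmt \<Rightarrow> 'v stmt \<Rightarrow> 'v stmt" where
  "conj_stmt A B = [a @ b. a \<leftarrow> A, b \<leftarrow> B]"

definition neg_stmt :: "'v stmt \<Rightarrow> 'v stmt" where
  "neg_stmt P = foldr (\<lambda>c acc. conj_stmt (map (\<lambda>a. [neg_atom a]) c) acc) P [[]]"

definition stmt_imp :: "nat \<Rightarrow> (nat \<Rightarrow> 'v set) \<Rightarrow> (nat \<Rightarrow> 'v \<Rightarrow> 'v \<Rightarrow> bool) \<Rightarrow> 'v stmt \<Rightarrow> 'v stmt \<Rightarrow> bool" where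
  "stmt_imp d V le P Q = (\<forall>t1\<in>tuples d V. \<forall>t2\<in>tuples d V. holds_stmt le P t1 t2 \<longrightarrow> holds_stmt le Q t1 t2)"

text \<open>A statement is dropped if it is implied by another statement; among
  equivalent statements only the first occurrence is kept.\<close>
definition remove_subsumed :: "nat \<Rightarrow> (nat \<Rightarrow> 'v set) \<Rightarrow> (nat \<Rightarrow> 'v \<Rightarrow> 'v \<Rightarrow> bool) \<Rightarrow> 'v formula \<Rightarrow> 'v formula" where
  "remove_subsumed d V le F =
     map snd (filter (\<lambda>(i, P). \<not> (\<exists>j<length F. j \<noteq> i \<and> stmt_imp d V le P (F ! j) \<and>
                                        (\<not> stmt_imp d V le (F ! j) P \<or> j < i)))
                     (zip [0..<length F] F))"

definition cleanup :: "nat \<Rightarrow> (nat \<Rightarrow> 'v set) \<Rightarrow> (nat \<Rightarrow> 'v \<Rightarrow> 'v \<Rightarrow> bool) \<Rightarrow> 'v formula \<Rightarrow> 'v formula" where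
  "cleanup d V le F = remove_subsumed d V le (map (filter (clause_sat d V le)) F)"

definition in_impl :: "nat \<Rightarrow> (nat \<Rightarrow> 'v set) \<Rightarrow> (nat \<Rightarrow> 'v \<Rightarrow> 'v \<Rightarrow> bool) \<Rightarrow> 'v stmt \<Rightarrow> 'v stmt \<Rightarrow> bool" where
  "in_impl d V le P Q =
     ((\<forall>t1\<in>tuples d V. \<forall>t2\<in>tuples d V. holds_stmt le Q t2 t1 \<longrightarrow> holds_stmt le P t1 t2) \<and>
      \<not> (\<forall>t1\<in>tuples d V. \<forall>t2\<in>tuples d V. holds_stmt le P t1 t2 \<longrightarrow> holds_stmt le Q t2 t1))"

definition impl_list :: "nat \<Rightarrow> (nat \<Rightarrow> 'v set) \<Rightarrow> (nat \<Rightarrow> 'v \<Rightarrow> 'v \<Rightarrow> bool) \<Rightarrow> 'v formula \<Rightarrow> 'v stmt \<Rightarrow> 'v stmt list" where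
  "impl_list d V le F P = filter (in_impl d V le P) F"

definition S_round :: "nat \<Rightarrow> (nat \<Rightarrow> 'v set) \<Rightarrow> (nat \<Rightarrow> 'v \<Rightarrow> 'v \<Rightarrow> bool) \<Rightarrow> 'v formula \<Rightarrow> 'v formula" where
  "S_round d V le F = map (\<lambda>P. let I = impl_list d V le F P in
      if I = [] then P else foldl (\<lambda>acc Q. conj_stmt acc (neg_stmt (swap_stmt Q))) P I) F"

definition S_stable :: "nat \<Rightarrow> (nat \<Rightarrow> 'v set) \<Rightarrow> (nat \<Rightarrow> 'v \<Rightarrow> 'v \<Rightarrow> bool) \<Rightarrow> 'v formula \<Rightarrow> bool" where
  "S_stable d V le F = (\<forall>P\<in>set F. impl_list d V le F P = [])"

definition S_op :: "nat \<Rightarrow> (nat \<Rightarrow> 'v set) \<Rightarrow> (nat \<Rightarrow> 'v \<Rightarrow> 'v \<Rightarrow> bool) \<Rightarrow> 'v formula \<Rightarrow> 'v formula" where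
  "S_op d V le F = cleanup d V le
     ((S_round d V le ^^ (LEAST n. S_stable d V le ((S_round d V le ^^ n) F))) F)"

definition T_impl :: "nat \<Rightarrow> (nat \<Rightarrow> 'v set) \<Rightarrow> (nat \<Rightarrow> 'v \<Rightarrow> 'v \<Rightarrow> bool) \<Rightarrow> ('v formula \<Rightarrow> 'v formula) \<Rightarrow> bool" where
  "T_impl d V le Tf = (\<forall>F. wf_formula d V le F \<longrightarrow>
      wf_formula d V le (Tf F) \<and> induced d V le (Tf F) = trancl (induced d V le F))"

datatype op = OpT | OpS

fun apply_op :: "nat \<Rightarrow> (nat \<Rightarrow> 'v set) \<Rightarrow> (nat \<Rightarrow> 'v \<Rightarrow> 'v \<Rightarrow> bool) \<Rightarrow> ('v formula \<Rightarrow> 'v formula)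
    \<Rightarrow> op \<Rightarrow> 'v formula \<Rightarrow> 'v formula" where
  "apply_op d V le Tf OpT F = cleanup d V le (Tf F)"
| "apply_op d V le Tf OpS F = S_op d V le F"

text \<open>Apply the operators of X in order (leftmost first).\<close>
definition apply_ops :: "nat \<Rightarrow> (nat \<Rightarrow> 'v set) \<Rightarrow> (nat \<Rightarrow> 'v \<Rightarrow> 'v \<Rightarrow> bool) \<Rightarrow> ('v formula \<Rightarrow> 'v formula)
    \<Rightarrow> op list \<Rightarrow> 'v formula \<Rightarrow> 'v formula" where
  "apply_ops d V le Tf X F = fold (apply_op d V le Tf) X F"

definition pref_rel :: "nat \<Rightarrow> (nat \<Rightarrow> 'v set) \<Rightarrow> (nat \<Rightarrow> 'v \<Rightarrow> 'v \<Rightarrow> bool) \<Rightarrow> ('v formula \<Rightarrow> 'v formula)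
    \<Rightarrow> op list \<Rightarrow> 'v formula \<Rightarrow> ('v ttuple \<times> 'v ttuple) set" where
  "pref_rel d V le Tf X F = induced d V le (apply_ops d V le Tf X F)"

definition contained :: "nat \<Rightarrow> (nat \<Rightarrow> 'v set) \<Rightarrow> (nat \<Rightarrow> 'v \<Rightarrow> 'v \<Rightarrow> bool) \<Rightarrow> ('v formula \<Rightarrow> 'v formula)
    \<Rightarrow> op list \<Rightarrow> op list \<Rightarrow> bool" where
  "contained d V le Tf X Y = (\<forall>F. wf_formula d V le F \<longrightarrow> pref_rel d V le Tf X F \<subseteq> pref_rel d V le Tf Y F)"

end

theory Submission
  imports Defs
begin

definition AW :: "nat \<Rightarrow> (nat \<Rightarrow> 'v set) \<Rightarrow> 'v formula \<Rightarrow> bool" where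
  "AW d V F = (\<forall>P\<in>set F. \<forall>c\<in>set P. \<forall>a\<in>set c. wf_atom d V a)"

definition SAW :: "nat \<Rightarrow> (nat \<Rightarrow> 'v set) \<Rightarrow> 'v stmt \<Rightarrow> bool" where
  "SAW d V P = (\<forall>c\<in>set P. \<forall>a\<in>set c. wf_atom d V a)"

lemma SAW_conj: "SAW d V A \<Longrightarrow> SAW d V B \<Longrightarrow> SAW d V (conj_stmt A B)"
  unfolding SAW_def conj_stmt_def by auto

lemma wf_neg: "wf_atom d V a \<Longrightarrow> wf_atom d V (neg_atom a)"
  by (cases a) auto

lemma wf_swap: "wf_atom d V a \<Longrightarrow> wf_atom d V (swap_atom a)"
  by (cases a) auto

lemma SAW_swap: "SAW d V P \<Longrightarrow> SAW d V (swap_stmt P)"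
  unfolding SAW_def swap_stmt_def by (auto intro: wf_swap)

lemma SAW_neg: "SAW d V P \<Longrightarrow> SAW d V (neg_stmt P)"
  unfolding neg_stmt_def
proof (induction P)
  case Nil
  then show ?case by (simp add: SAW_def)
next
  case (Cons c P)
  have "SAW d V (map (\<lambda>a. [neg_atom a]) c)"
    using Cons.prems unfolding SAW_def by (auto intro: wf_neg)
  moreover have "SAW d V P" using Cons.prems unfolding SAW_def by auto
  ultimately show ?case using Cons.IH by (simp add: SAW_conj)
qed

lemma SAW_foldl: "SAW d V acc \<Longrightarrow> \<forall>Q\<in>set I. SAW d V Q \<Longrightarrow>
   SAW d V (foldl (\<lambda>acc Q. conj_stmt acc (neg_stmt (swap_stmt Q))) acc I)"
  by (induction I arbitrary: acc) (auto intro!: SAW_conj SAW_neg SAW_swap)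

lemma AW_SAW: "AW d V F = (\<forall>P\<in>set F. SAW d V P)"
  unfolding AW_def SAW_def by auto

lemma AW_S_round: "AW d V F \<Longrightarrow> AW d V (S_round d V le F)"
  unfolding AW_SAW S_round_def impl_list_def Let_def
  by (auto intro!: SAW_foldl)

lemma AW_S_round_pow: "AW d V F \<Longrightarrow> AW d V ((S_round d V le ^^ n) F)"
  by (induction n) (auto intro: AW_S_round)

lemma set_remove_subsumed: "set (remove_subsumed d V le F) \<subseteq> set F"
  unfolding remove_subsumed_def by (auto dest: set_zip_rightD)

lemma AW_cleanup_wf: "AW d V F \<Longrightarrow> wf_formula d V le (cleanup d V le F)"
  unfolding wf_formula_def cleanup_def AW_def
  using set_remove_subsumed[of d V le "map (filter (clause_sat d V le)) F"]
  by fastforce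

lemma wf_AW: "wf_formula d V le F \<Longrightarrow> AW d V F"
  unfolding wf_formula_def AW_def by auto

lemma wf_apply_op:
  assumes "T_impl d V le Tf" "wf_formula d V le F"
  shows "wf_formula d V le (apply_op d V le Tf o' F)"
proof (cases o')
  case OpT
  then show ?thesis using assms unfolding T_impl_def
    by (auto intro!: AW_cleanup_wf wf_AW)
next
  case OpS
  then show ?thesis using assms
    by (simp add: S_op_def AW_cleanup_wf AW_S_round_pow wf_AW)
qed

lemma wf_apply_ops:
  assumes "T_impl d V le Tf" "wf_formula d V le F"
  shows "wf_formula d V le (apply_ops d V le Tf X F)"
  using assms(2) unfolding apply_ops_def
  by (induction X arbitrary: F) (auto intro: wf_apply_op[OF assms(1)])

lemma holds_conj: "holds_stmt le (conj_stmt A B) t1 t2 \<Longrightarrow> holds_stmt le A t1 t2"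
  unfolding holds_stmt_def conj_stmt_def holds_clause_def by auto

lemma holds_foldl: "holds_stmt le (foldl (\<lambda>acc Q. conj_stmt acc (neg_stmt (swap_stmt Q))) acc I) t1 t2
   \<Longrightarrow> holds_stmt le acc t1 t2"
  by (induction I arbitrary: acc) (auto dest: holds_conj)

lemma holds_S_round: "holds_formula le (S_round d V le F) t1 t2 \<Longrightarrow> holds_formula le F t1 t2"
  unfolding holds_formula_def S_round_def Let_def
  by (auto split: if_splits dest: holds_foldl)

lemma holds_S_round_pow: "holds_formula le ((S_round d V le ^^ n) F) t1 t2 \<Longrightarrow> holds_formula le F t1 t2"
  by (induction n) (auto dest: holds_S_round)

lemma cleanup_sub: "induced d V le (cleanup d V le F) \<subseteq> induced d V le F"
  unfolding induced_def cleanup_def holds_formula_def holds_stmt_def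
  using set_remove_subsumed[of d V le "map (filter (clause_sat d V le)) F"]
  by fastforce

lemma S_op_sub: "induced d V le (S_op d V le F) \<subseteq> induced d V le F"
  using cleanup_sub[of d V le] unfolding S_op_def
  by (fastforce simp: induced_def dest: holds_S_round_pow)

lemma trancl_mono2: "A \<subseteq> B \<Longrightarrow> trancl A \<subseteq> trancl B"
  by (meson subrelI trancl_mono)

lemma stmt_imp_refl: "stmt_imp d V le P P"
  unfolding stmt_imp_def by auto

lemma stmt_imp_trans: "stmt_imp d V le P Q \<Longrightarrow> stmt_imp d V le Q R \<Longrightarrow> stmt_imp d V le P R"
  unfolding stmt_imp_def by blast

lemma remove_subsumed_kept:
  fixes F :: "'v formula"
  assumes "k < length F"
  shows "\<exists>m<length F. stmt_imp d V le (F ! k) (F ! m) \<and> F ! m \<in> set (remove_subsumed d V le F)"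
  using assms
proof (induction "card {j. j < length F \<and> stmt_imp d V le (F!k) (F!j)} * length F + k"
       arbitrary: k rule: less_induct)
  case less
  let ?drop = "\<lambda>i P. \<exists>j<length F. j \<noteq> i \<and> stmt_imp d V le P (F ! j) \<and>
                                        (\<not> stmt_imp d V le (F ! j) P \<or> j < i)"
  show ?case
  proof (cases "?drop k (F!k)")
    case False
    have "(k, F!k) \<in> set (zip [0..<length F] F)"
      using less.prems by (auto simp: set_zip intro!: exI[of _ k])
    then have "F!k \<in> set (remove_subsumed d V le F)"
      unfolding remove_subsumed_def using False
      by (force intro: rev_image_eqI[of "(k, F!k)"])
    then show ?thesis using less.prems stmt_imp_refl by blast
  next
    case True
    then obtain j where j: "j < length F" "j \<noteq> k" "stmt_imp d V le (F!k) (F!j)"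
      "\<not> stmt_imp d V le (F ! j) (F!k) \<or> j < k" by blast
    define U where "U = (\<lambda>k. {j. j < length F \<and> stmt_imp d V le (F!k) (F!j)})"
    have fin: "finite (U k)" unfolding U_def by auto
    have sub: "U j \<subseteq> U k" unfolding U_def using j(3) stmt_imp_trans by blast
    have "card (U j) * length F + j < card (U k) * length F + k"
    proof (cases "stmt_imp d V le (F ! j) (F!k)")
      case True
      then have "U k \<subseteq> U j" unfolding U_def using stmt_imp_trans by blast
      with sub have "U j = U k" by auto
      then show ?thesis using j(4) True by simp
    next
      case False
      then have "k \<notin> U j" unfolding U_def by auto
      moreover have "k \<in> U k" unfolding U_def using less.prems stmt_imp_refl by auto
      ultimately have "U j \<subset> U k" using sub by auto
      then have "card (U j) < card (U k)" using fin by (simp add: psubset_card_mono)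
      then have "card (U j) + 1 \<le> card (U k)" by simp
      then have "(card (U j) + 1) * length F \<le> card (U k) * length F" by (rule mult_right_mono) simp
      then show ?thesis using j(1) by (simp add: algebra_simps)
    qed
    then obtain m where "m<length F" "stmt_imp d V le (F ! j) (F ! m)"
      "F ! m \<in> set (remove_subsumed d V le F)"
      using less.hyps[OF _ j(1)] unfolding U_def by blast
    then show ?thesis using j(3) stmt_imp_trans by blast
  qed
qed

lemma cleanup_sup: "induced d V le F \<subseteq> induced d V le (cleanup d V le F)"
proof
  fix p assume "p \<in> induced d V le F"
  then obtain t1 t2 where p: "p = (t1,t2)" "t1 \<in> tuples d V" "t2 \<in> tuples d V"
    and h: "holds_formula le F t1 t2" unfolding induced_def by auto
  let ?F' = "map (filter (clause_sat d V le)) F"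
  from h obtain P c where P: "P \<in> set F" "c \<in> set P" "holds_clause le c t1 t2"
    unfolding holds_formula_def holds_stmt_def by auto
  from P(1) obtain k where k: "k < length F" "F!k = P" by (auto simp: in_set_conv_nth)
  have "clause_sat d V le c" unfolding clause_sat_def using p P by blast
  then have hk: "holds_stmt le (?F'!k) t1 t2" using k P unfolding holds_stmt_def by auto
  obtain m where m: "m < length ?F'" "stmt_imp d V le (?F'!k) (?F'!m)"
    "?F'!m \<in> set (remove_subsumed d V le ?F')"
    using remove_subsumed_kept[of k ?F' d V le] k by auto
  have "holds_stmt le (?F'!m) t1 t2" using m(2) hk p unfolding stmt_imp_def by blast
  then have "holds_formula le (cleanup d V le F) t1 t2"
    using m(3) unfolding holds_formula_def cleanup_def by blast
  then show "p \<in> induced d V le (cleanup d V le F)" using p unfolding induced_def by auto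
qed

lemma cleanup_eq: "induced d V le (cleanup d V le F) = induced d V le F"
  using cleanup_sub cleanup_sup by blast

theorem mainTheorem3:
  fixes d :: nat and V :: "nat \<Rightarrow> 'v set" and le :: "nat \<Rightarrow> 'v \<Rightarrow> 'v \<Rightarrow> bool"
    and Tf :: "'v formula \<Rightarrow> 'v formula" and X :: "op list"
  assumes "taxonomies d V le"
    and "T_impl d V le Tf"
  shows "contained d V le Tf (X @ [OpT, OpS, OpT]) (X @ [OpT])"
  unfolding contained_def
proof (intro allI impI)
  fix F assume wfF: "wf_formula d V le F"
  define G where "G = apply_ops d V le Tf X F"
  have wfG: "wf_formula d V le G" unfolding G_def by (rule wf_apply_ops[OF assms(2) wfF])
  define H where "H = cleanup d V le (Tf G)"
  have wfTG: "wf_formula d V le (Tf G)" and TG: "induced d V le (Tf G) = trancl (induced d V le G)"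
    using assms(2) wfG unfolding T_impl_def by auto
  have wfH: "wf_formula d V le H" unfolding H_def using AW_cleanup_wf[OF wf_AW[OF wfTG]] .
  have IH: "induced d V le H = trancl (induced d V le G)" unfolding H_def using cleanup_eq TG by metis
  have transH: "trans (induced d V le H)" using IH by simp
  define K where "K = S_op d V le H"
  have wfK: "wf_formula d V le K" unfolding K_def S_op_def
    by (auto intro!: AW_cleanup_wf AW_S_round_pow wf_AW[OF wfH])
  have TK: "induced d V le (Tf K) = trancl (induced d V le K)"
    using assms(2) wfK unfolding T_impl_def by auto
  have "induced d V le (cleanup d V le (Tf K)) = trancl (induced d V le K)"
    using cleanup_eq TK by metis
  also have "\<dots> \<subseteq> trancl (induced d V le H)"
    using S_op_sub[of d V le H] unfolding K_def by (rule trancl_mono2)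
  also have "\<dots> = induced d V le H" using transH by simp
  finally have main: "induced d V le (cleanup d V le (Tf K)) \<subseteq> induced d V le H" .
  have e1: "apply_ops d V le Tf (X @ [OpT, OpS, OpT]) F = cleanup d V le (Tf K)"
    unfolding apply_ops_def K_def H_def G_def by simp
  have e2: "apply_ops d V le Tf (X @ [OpT]) F = H"
    unfolding apply_ops_def H_def G_def by simp
  show "pref_rel d V le Tf (X @ [OpT, OpS, OpT]) F \<subseteq> pref_rel d V le Tf (X @ [OpT]) F"
    unfolding pref_rel_def e1 e2 using main .
qed

end
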